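(* Let $T\ge 1$ be an integer and let $v>0$, $c>0$, $k>0$, $\beta\in(0,1]$ with $kT<v$, and suppose $(1-\beta)c>\beta k$. Let $\varrho:=\lceil (1-\beta)c/(\beta k)\rceil$. Consider the stopping problem on times $\{0,1,\dots,T\}$ in which, from the perspective of time $t$, stopping at time $t+j$ ($0\le j\le T-t$) has value $\beta v-c$ if $j=0$ and $\beta(v-jk-c)$ if $j\ge1$. A (pure) strategy is a map $\sigma:\{0,\dots,T\}\to\{0,1\}$ with $\sigma(T)=1$ ($1$ = stop, $0$ = continue); for $t<T$ let $\tau_\sigma(t)=\min\{s>t:\sigma(s)=1\}$. Define: - the naive strategy $\sigma_0$: $\sigma_0(T)=1$ and for $t<T$, $\sigma_0(t)=1$ iff $\beta v-c\ge \max_{1\le j\le T-t}\beta(v-jk-c)$; - the update $\sigma\mapsto\sigma'$: $\sigma'(T)=1$ and for $t<T$, $\sigma'(t)=1$ iff $\beta v-c\ge \beta\big(v-(\tau_\sigma(t)-t)k-c\big)$; set $\sigma_{n+1}=\sigma_n'$ for $n\ge0$; - the sophisticated strategy $\sigma_S$: $\sigma_S(T)=1$ and, backward for $t=T-1,\dots,0$, $\sigma_S(t)=1$ iff $\beta v-c\ge\beta\big(v-(\tau_{\sigma_S}(t)-t)k-c\big)$. Then $\varrho\ge 2$, and $\sigma_n=\sigma_S$ for $n=2\big(\lceil (T+1)/\varrho\rceil-1\big)$; that is, the naive strategy is turned into the sophisticated one after $2(\lceil (T+1)/\varrho\rceil-1)$ rounds of training.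
   Context: This is the present-biased optimal stopping problem with immediate cost: stopping immediately costs $c$ now while the reward $v$ is received later (discounted by $\beta$); stopping $j\ge1$ periods later discounts both cost and reward by $\beta$ and reduces the reward by $jk$. The problem is state-independent, so strategies depend only on time. Ties are broken in favour of stopping. In each training round the agent at time $t$ chooses whether to stop now, taking as given that from time $t+1$ on she follows the previous round's strategy. *)

theory Defs
  imports Complex_Main
begin

text \<open>Strategies are maps nat => bool (True = stop); only their values on
  times 0..T matter. Parameters: horizon T, discount beta, reward v,
  immediate cost c, per-period reward reduction k.\<close>

definition tau :: "nat \<Rightarrow> (nat \<Rightarrow> bool) \<Rightarrow> nat \<Rightarrow> nat" where
  "tau T \<sigma> t = (LEAST s. t < s \<and> s \<le> T \<and> \<sigma> s)"

definition naive :: "nat \<Rightarrow> real \<Rightarrow> real \<Rightarrow> real \<Rightarrow> real \<Rightarrow> nat \<Rightarrow> bool" where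
  "naive T \<beta> v c k t =
     (T \<le> t \<or>
      \<beta> * v - c \<ge> Max ((\<lambda>j. \<beta> * (v - real j * k - c)) ` {1..T - t}))"

definition upd :: "nat \<Rightarrow> real \<Rightarrow> real \<Rightarrow> real \<Rightarrow> real \<Rightarrow> (nat \<Rightarrow> bool) \<Rightarrow> nat \<Rightarrow> bool" where
  "upd T \<beta> v c k \<sigma> t =
     (T \<le> t \<or> \<beta> * v - c \<ge> \<beta> * (v - real (tau T \<sigma> t - t) * k - c))"

definition trained :: "nat \<Rightarrow> real \<Rightarrow> real \<Rightarrow> real \<Rightarrow> real \<Rightarrow> nat \<Rightarrow> nat \<Rightarrow> bool" where
  "trained T \<beta> v c k n = ((upd T \<beta> v c k) ^^ n) (naive T \<beta> v c k)"

text \<open>Backward induction: soph_aux m has its decisions fixed at times T-m,...,T.\<close>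
fun soph_aux :: "nat \<Rightarrow> real \<Rightarrow> real \<Rightarrow> real \<Rightarrow> real \<Rightarrow> nat \<Rightarrow> nat \<Rightarrow> bool" where
  "soph_aux T \<beta> v c k 0 = (\<lambda>s. T \<le> s)"
| "soph_aux T \<beta> v c k (Suc m) =
     (let \<sigma> = soph_aux T \<beta> v c k m; t = T - Suc m in
        \<sigma>(t := (\<beta> * v - c \<ge> \<beta> * (v - real (tau T \<sigma> t - t) * k - c))))"

definition soph :: "nat \<Rightarrow> real \<Rightarrow> real \<Rightarrow> real \<Rightarrow> real \<Rightarrow> nat \<Rightarrow> bool" where
  "soph T \<beta> v c k = soph_aux T \<beta> v c k T"

end

theory Submission
  imports Defs
begin

lemma lemD:
  fixes t u i j r :: nat
  assumes "t + i*r = T" "t < u" "u < t + r" "u + j*r = T"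
  shows False
proof (cases "i \<le> j")
  case True
  then have "i*r \<le> j*r" by (simp add: mult_right_mono)
  then show False using assms by linarith
next
  case False
  then obtain i' where i': "i = Suc i'" by (cases i) auto
  then have "j \<le> i'" using False by simp
  then have "j*r \<le> i'*r" by (rule mult_le_mono1)
  moreover have "i*r = r + i'*r" using i' by simp
  ultimately show False using assms by linarith
qed

lemma lemC:
  fixes t r M T :: nat
  assumes "t < T" "r > 0" "\<not>(\<exists>i\<le>M. t + i*r = T)" "T < t + (M+1)*r"
  shows "\<exists>u j. t < u \<and> u < t + r \<and> j \<le> M \<and> u + j*r = T"
proof -
  define j where "j = (T - t) div r"
  define e where "e = (T - t) mod r"
  have de: "T - t = j*r + e" unfolding j_def e_def by simp
  have "e < r" unfolding e_def using assms by simp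
  have "j*r < (M+1)*r" using de assms by linarith
  then have "j < M + 1" by (metis mult_less_cancel2)
  then have jM: "j \<le> M" by simp
  have "e \<noteq> 0" using assms(3) jM de assms(1) by auto
  show ?thesis
    apply (rule exI[of _ "t+e"], rule exI[of _ j])
    using \<open>e < r\<close> \<open>e \<noteq> 0\<close> jM de assms(1) by auto
qed

lemma ineq_iff:
  fixes \<beta> v c k :: real and d :: nat
  assumes "k > 0" "0 < \<beta>"
  shows "(\<beta> * v - c \<ge> \<beta> * (v - real d * k - c)) \<longleftrightarrow>
         \<lceil>(1 - \<beta>) * c / (\<beta> * k)\<rceil> \<le> int d"
proof -
  have bk: "\<beta> * k > 0" using assms by simp
  have "(\<beta> * v - c \<ge> \<beta> * (v - real d * k - c)) \<longleftrightarrow> (1 - \<beta>) * c \<le> real d * (\<beta> * k)"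
    by (simp add: algebra_simps)
  also have "\<dots> \<longleftrightarrow> (1 - \<beta>) * c / (\<beta> * k) \<le> real d"
    using bk by (simp add: pos_divide_le_eq)
  also have "\<dots> \<longleftrightarrow> \<lceil>(1 - \<beta>) * c / (\<beta> * k)\<rceil> \<le> int d"
    by (simp add: ceiling_le_iff)
  finally show ?thesis .
qed

lemma upd_iff:
  fixes \<beta> v c k :: real and r :: nat
  assumes "k > 0" "0 < \<beta>" "\<lceil>(1 - \<beta>) * c / (\<beta> * k)\<rceil> = int r"
    and stopT: "\<And>s. T \<le> s \<Longrightarrow> \<sigma> s" and "t < T"
  shows "upd T \<beta> v c k \<sigma> t \<longleftrightarrow> (\<forall>u. t < u \<and> u < t + r \<longrightarrow> \<not> \<sigma> u)"
proof -
  define s where "s = tau T \<sigma> t"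
  have ex: "t < T \<and> T \<le> T \<and> \<sigma> T" using assms by auto
  have s1: "t < s \<and> s \<le> T \<and> \<sigma> s" unfolding s_def tau_def
    by (rule LeastI[of _ T], rule ex)
  have s2: "\<And>u. t < u \<Longrightarrow> u < s \<Longrightarrow> \<not> \<sigma> u"
  proof
    fix u assume "t < u" "u < s" "\<sigma> u"
    then have "t < u \<and> u \<le> T \<and> \<sigma> u" using s1 by simp
    then have "s \<le> u" unfolding s_def tau_def by (rule Least_le)
    then show False using \<open>u < s\<close> by simp
  qed
  have "upd T \<beta> v c k \<sigma> t \<longleftrightarrow> int r \<le> int (s - t)"
    unfolding upd_def s_def[symmetric] using ineq_iff[OF assms(1,2)] assms(3,5) by simp
  also have "\<dots> \<longleftrightarrow> t + r \<le> s" using s1 by auto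
  also have "\<dots> \<longleftrightarrow> (\<forall>u. t < u \<and> u < t + r \<longrightarrow> \<not> \<sigma> u)"
    using s1 s2 by (meson le_less_trans linorder_not_le)
  finally show ?thesis .
qed

definition Pd :: "nat \<Rightarrow> nat \<Rightarrow> nat \<Rightarrow> nat \<Rightarrow> bool" where
  "Pd T r m u = (T \<le> u \<or> (\<exists>i\<le>m. u + i*r = T))"
definition Qd :: "nat \<Rightarrow> nat \<Rightarrow> nat \<Rightarrow> nat \<Rightarrow> bool" where
  "Qd T r m u = (Pd T r m u \<or> u + (m+1)*r \<le> T)"

lemma lemA:
  assumes "t < T" "r \<ge> 2"
  shows "(\<forall>u. t < u \<and> u < t + r \<longrightarrow> \<not> Pd T r m u) \<longleftrightarrow> Qd T r m t"
proof
  assume H: "\<forall>u. t < u \<and> u < t + r \<longrightarrow> \<not> Pd T r m u"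
  show "Qd T r m t"
  proof (rule ccontr)
    assume nq: "\<not> Qd T r m t"
    then have "\<not>(\<exists>i\<le>m. t + i*r = T)" "T < t + (m+1)*r" unfolding Qd_def Pd_def by auto
    from lemC[OF assms(1) _ this] assms obtain u j where
      "t < u" "u < t + r" "j \<le> m" "u + j*r = T" by auto
    then show False using H unfolding Pd_def by blast
  qed
next
  assume q: "Qd T r m t"
  show "\<forall>u. t < u \<and> u < t + r \<longrightarrow> \<not> Pd T r m u"
  proof (intro allI impI)
    fix u assume u: "t < u \<and> u < t + r"
    show "\<not> Pd T r m u"
    proof
      assume pu: "Pd T r m u"
      from q show False unfolding Qd_def Pd_def
      proof (elim disjE exE conjE)
        assume "T \<le> t" then show False using assms by simp
      next
        fix i assume i: "i \<le> m" "t + i*r = T"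
        then have "i \<noteq> 0" using assms by auto
        then have "r \<le> i*r" by simp
        then have "t + r \<le> T" using i by linarith
        from pu show False unfolding Pd_def
        proof (elim disjE exE conjE)
          assume "T \<le> u" then show False using u \<open>t + r \<le> T\<close> by simp
        next
          fix j assume "j \<le> m" "u + j*r = T"
          then show False using lemD[OF i(2) _ _ ] u by blast
        qed
      next
        assume h: "t + (m+1)*r \<le> T"
        from pu show False unfolding Pd_def
        proof (elim disjE exE conjE)
          assume "T \<le> u" then show False using u h by simp
        next
          fix j assume "j \<le> m" "u + j*r = T"
          then have "j*r \<le> m*r" by (simp add: mult_right_mono)
          moreover have "(m+1)*r = m*r + r" by simp
          ultimately show False using h u \<open>u + j*r = T\<close> by linarith
        qed
      qed
    qed
  qed
qed

lemma lemB:
  assumes "t < T" "r \<ge> 2"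
  shows "(\<forall>u. t < u \<and> u < t + r \<longrightarrow> \<not> Qd T r m u) \<longleftrightarrow> Pd T r (m+1) t"
proof
  assume H: "\<forall>u. t < u \<and> u < t + r \<longrightarrow> \<not> Qd T r m u"
  show "Pd T r (m+1) t"
  proof (rule ccontr)
    assume np: "\<not> Pd T r (m+1) t"
    show False
    proof (cases "t + 1 + (m+1)*r \<le> T")
      case True
      then have "Qd T r m (t+1)" unfolding Qd_def by simp
      then show False using H assms by auto
    next
      case False
      have "t + (m+1)*r \<noteq> T" using np unfolding Pd_def by blast
      with False have lt: "T < t + (m+1)*r" by simp
      have "\<not>(\<exists>i\<le>m. t + i*r = T)" using np unfolding Pd_def by auto
      from lemC[OF assms(1) _ this lt] assms obtain u j where
        "t < u" "u < t + r" "j \<le> m" "u + j*r = T" by auto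
      then show False using H unfolding Qd_def Pd_def by blast
    qed
  qed
next
  assume p: "Pd T r (m+1) t"
  then obtain i where i: "i \<le> m+1" "t + i*r = T" using assms unfolding Pd_def by auto
  then have "i \<noteq> 0" using assms by auto
  then have "r \<le> i*r" by simp
  then have tr: "t + r \<le> T" using i by linarith
  show "\<forall>u. t < u \<and> u < t + r \<longrightarrow> \<not> Qd T r m u"
  proof (intro allI impI)
    fix u assume u: "t < u \<and> u < t + r"
    show "\<not> Qd T r m u"
    proof
      assume "Qd T r m u"
      then show False unfolding Qd_def Pd_def
      proof (elim disjE exE conjE)
        assume "T \<le> u" then show False using u tr by simp
      next
        fix j assume "j \<le> m" "u + j*r = T"
        then show False using lemD[OF i(2) _ _ ] u by blast
      next
        assume h: "u + (m+1)*r \<le> T"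
        have "i*r \<le> (m+1)*r" using mult_le_mono1[OF i(1)] by blast
        then show False using h u i(2) by linarith
      qed
    qed
  qed
qed

lemma lemE:
  fixes t T r :: nat
  assumes "t < T" "r \<ge> 2"
  shows "(\<forall>u. t < u \<and> u < t + r \<longrightarrow> \<not>(T \<le> u \<or> (t < u \<and> (\<exists>i. u + i*r = T))))
          \<longleftrightarrow> (\<exists>i. t + i*r = T)"
proof
  assume H: "\<forall>u. t < u \<and> u < t + r \<longrightarrow> \<not>(T \<le> u \<or> (t < u \<and> (\<exists>i. u + i*r = T)))"
  show "\<exists>i. t + i*r = T"
  proof (rule ccontr)
    assume n: "\<not> (\<exists>i. t + i*r = T)"
    then have n2: "\<not>(\<exists>i\<le>T. t + i*r = T)" by blast
    have "T*1 \<le> T*r" using assms by (intro mult_le_mono2) auto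
    moreover have "(T+1)*r = r + T*r" by simp
    ultimately have "T < t + (T+1)*r" using assms by linarith
    from lemC[OF assms(1) _ n2 this] assms obtain u j where
      "t < u" "u < t + r" "j \<le> T" "u + j*r = T" by auto
    then show False using H by blast
  qed
next
  assume "\<exists>i. t + i*r = T"
  then obtain i where i: "t + i*r = T" by blast
  then have "i \<noteq> 0" using assms by auto
  then have "r \<le> i*r" by simp
  then have tr: "t + r \<le> T" using i by linarith
  show "\<forall>u. t < u \<and> u < t + r \<longrightarrow> \<not>(T \<le> u \<or> (t < u \<and> (\<exists>i. u + i*r = T)))"
    using lemD[OF i] tr by fastforce
qed

lemma soph_aux_eq:
  fixes \<beta> v c k :: real and r :: nat
  assumes "k > 0" "0 < \<beta>" "\<lceil>(1 - \<beta>) * c / (\<beta> * k)\<rceil> = int r" "r \<ge> 2"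
  shows "m \<le> T \<Longrightarrow> soph_aux T \<beta> v c k m = (\<lambda>s. T \<le> s \<or> (T - m \<le> s \<and> (\<exists>i. s + i*r = T)))"
proof (induction m)
  case 0
  then show ?case by auto
next
  case (Suc m)
  define t where "t = T - Suc m"
  have tT: "t < T" using Suc.prems unfolding t_def by simp
  have tm: "T - m = Suc t" using Suc.prems unfolding t_def by simp
  define \<sigma> where "\<sigma> = soph_aux T \<beta> v c k m"
  have sig: "\<sigma> = (\<lambda>s. T \<le> s \<or> (t < s \<and> (\<exists>i. s + i*r = T)))"
    unfolding \<sigma>_def using Suc tm by auto
  have eq: "soph_aux T \<beta> v c k (Suc m) = \<sigma>(t := upd T \<beta> v c k \<sigma> t)"
    using tT by (simp add: \<sigma>_def t_def Let_def upd_def)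
  have "upd T \<beta> v c k \<sigma> t \<longleftrightarrow> (\<exists>i. t + i*r = T)"
    using upd_iff[OF assms(1-3), of T \<sigma> t] tT lemE[OF tT assms(4)] unfolding sig by auto
  then show ?case unfolding eq t_def[symmetric] sig
    using tT by (auto simp: fun_eq_iff)
qed

lemma trained_Suc: "trained T \<beta> v c k (Suc n) = upd T \<beta> v c k (trained T \<beta> v c k n)"
  by (simp add: trained_def)

lemma naive_eq:
  fixes \<beta> v c k :: real
  assumes "k > 0" "0 < \<beta>" "(1 - \<beta>) * c > \<beta> * k"
  shows "naive T \<beta> v c k = Pd T r 0"
proof
  fix t
  show "naive T \<beta> v c k t = Pd T r 0 t"
  proof (cases "T \<le> t")
    case True then show ?thesis by (simp add: naive_def Pd_def)
  next
    case False
    have "\<beta> * (v - real 1 * k - c) \<le> Max ((\<lambda>j. \<beta> * (v - real j * k - c)) ` {1..T - t})"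
      using False by (intro Max_ge) auto
    moreover have "\<beta> * v - c < \<beta> * (v - real 1 * k - c)" using assms by (simp add: algebra_simps)
    ultimately have m: "\<beta> * v - c < Max ((\<lambda>j. \<beta> * (v - real j * k - c)) ` {1..T - t})"
      by linarith
    have "\<not> naive T \<beta> v c k t" unfolding naive_def using False m by linarith
    then show ?thesis using False by (simp add: Pd_def)
  qed
qed

lemma trained_eq:
  fixes \<beta> v c k :: real and r :: nat
  assumes "k > 0" "0 < \<beta>" "\<lceil>(1 - \<beta>) * c / (\<beta> * k)\<rceil> = int r" "r \<ge> 2"
    "(1 - \<beta>) * c > \<beta> * k"
  shows "trained T \<beta> v c k (2*m) = Pd T r m \<and> trained T \<beta> v c k (Suc (2*m)) = Qd T r m"
proof (induction m)
  have A: "\<And>m. upd T \<beta> v c k (Pd T r m) = Qd T r m"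
  proof
    fix m t
    show "upd T \<beta> v c k (Pd T r m) t = Qd T r m t"
    proof (cases "t < T")
      case True
      show ?thesis using upd_iff[OF assms(1-3), of T "Pd T r m" t] lemA[OF True assms(4)] True
        by (simp add: Pd_def)
    next
      case False then show ?thesis by (simp add: upd_def Qd_def Pd_def)
    qed
  qed
  {
  case 0
  have t0: "trained T \<beta> v c k 0 = Pd T r 0"
    by (simp add: trained_def naive_eq[OF assms(1,2,5)])
  show ?case using t0 A[of 0] by (simp add: trained_Suc)
  next
  case (Suc m)
  have B: "upd T \<beta> v c k (Qd T r m) = Pd T r (m+1)"
  proof
    fix t
    show "upd T \<beta> v c k (Qd T r m) t = Pd T r (m+1) t"
    proof (cases "t < T")
      case True
      show ?thesis using upd_iff[OF assms(1-3), of T "Qd T r m" t] lemB[OF True assms(4)] True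
        by (simp add: Pd_def Qd_def)
    next
      case False then show ?thesis by (simp add: upd_def Qd_def Pd_def)
    qed
  qed
  have e: "2 * Suc m = Suc (Suc (2*m))" by simp
  show ?case unfolding e trained_Suc using Suc B A[of "Suc m"] A[of m] by simp
  }
qed

theorem proposition5p1:
  fixes T :: nat and v c k \<beta> :: real
  assumes "T \<ge> 1" and "v > 0" and "c > 0" and "k > 0"
    and "0 < \<beta>" and "\<beta> \<le> 1"
    and "k * real T < v"
    and "(1 - \<beta>) * c > \<beta> * k"
  defines "\<rho> \<equiv> \<lceil>(1 - \<beta>) * c / (\<beta> * k)\<rceil>"
  shows "\<rho> \<ge> 2 \<and>
    (\<forall>t\<le>T. trained T \<beta> v c k (nat (2 * (\<lceil>real (T + 1) / real_of_int \<rho>\<rceil> - 1))) t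
             = soph T \<beta> v c k t)"
proof -
  have bk: "\<beta> * k > 0" using assms by simp
  have x1: "(1 - \<beta>) * c / (\<beta> * k) > 1" using assms(8) bk by simp
  then have "\<rho> > 1" unfolding \<rho>_def using less_ceiling_iff[of 1] by simp
  then have r2: "\<rho> \<ge> 2" by simp
  define r where "r = nat \<rho>"
  have rr: "\<rho> = int r" unfolding r_def using r2 by simp
  have r2n: "r \<ge> 2" using r2 rr by simp
  define C where "C = \<lceil>real (T + 1) / real_of_int \<rho>\<rceil>"
  have Cpos: "C \<ge> 1" unfolding C_def using r2 by (simp add: le_ceiling_iff)
  define m where "m = nat (C - 1)"
  have idx: "nat (2 * (C - 1)) = 2 * m" unfolding m_def using Cpos by simp
  have tr: "trained T \<beta> v c k (2*m) = Pd T r m"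
    using trained_eq[OF assms(4,5) _ r2n assms(8)] rr \<rho>_def by simp
  have so: "soph T \<beta> v c k = (\<lambda>s. T \<le> s \<or> (T - T \<le> s \<and> (\<exists>i. s + i*r = T)))"
    unfolding soph_def using soph_aux_eq[OF assms(4,5) _ r2n, of c T T v] rr \<rho>_def by simp
  have bound: "i \<le> m" if "t + i*r = T" for t i
  proof -
    have "real i * real r < real (T+1)" using that by (metis of_nat_less_iff of_nat_mult le_add2 le_imp_less_Suc add.commute Suc_eq_plus1 le_add1 le_trans)
    then have "real i < real (T+1) / real r" using r2n by (simp add: pos_less_divide_eq)
    also have "\<dots> \<le> real_of_int C" unfolding C_def rr by simp
    finally have "int i < C" by linarith
    then show ?thesis unfolding m_def by simp
  qed
  show ?thesis
  proof (intro conjI allI impI)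
    show "2 \<le> \<rho>" by (rule r2)
    fix t assume "t \<le> T"
    show "trained T \<beta> v c k (nat (2 * (\<lceil>real (T + 1) / real_of_int \<rho>\<rceil> - 1))) t = soph T \<beta> v c k t"
      unfolding C_def[symmetric] idx tr so Pd_def using bound by auto
  qed
qed

end
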